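(* Let $\alpha>0$, $y_0\in\mathrm{dom}\, h$, $\{x_i\}_{i=0}^{k-1}\subseteq\mathrm{dom}\, h$ and $\zeta\in[0,1]^k$, and let $\Gamma_k$ be the ACP model induced by $(y_0,\{x_i\}_{i=0}^{k-1},\zeta)$. Then: (a) $\Gamma_k(x)\leq\phi^\alpha(x)$ for all $x\in\mathrm{dom}\, h$; (b) $\Gamma_k$ is $\alpha$-strongly convex. Furthermore, define $s_0=\nabla f(y_0)$ and $s_{j+1}=(1-\zeta_j)s_j+\zeta_j\nabla f(x_j)$ for $0\leq j\leq k-1$. Then (c) for all $u\in\mathrm{dom}\, h$, $\phi^\alpha(u)+\psi^\alpha(s_k)\leq \phi^\alpha(u)-\min_{x\in\mathbb{R}^n}\Gamma_k(x)$.
   Context: Let $\|\cdot\|$ be a norm on $\mathbb{R}^n$ with dual norm $\|\cdot\|_*$. Let $f:\mathbb{R}^n\to\mathbb{R}$ be convex, differentiable and $L$-smooth ($L>0$) with respect to $\|\cdot\|$, $h:\mathbb{R}^n\to(-\infty,\infty]$ closed proper convex with bounded domain, and $w:\mathbb{R}^n\to[0,+\infty]$ closed, $1$-strongly convex with respect to $\|\cdot\|$ on $\mathrm{dom}\, h$, with $\max_{\mathrm{dom}\, h}w<\infty$. For $\alpha>0$ let $h^\alpha=h+\alpha w$, $\phi^\alpha=f+h^\alpha$, $\psi^\alpha(z)=(h^\alpha)^*(-z)+f^*(z)$ ($^*$ = convex conjugate). Write $\ell_f(x;x_0)=f(x_0)+\langle\nabla f(x_0),x-x_0\rangle$. The ACP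 (aggregated cutting plane) model induced by $(y_0,\{x_i\}_{i=0}^{k-1},\zeta)$ is $\Gamma_k$ defined recursively by $\Gamma_0(x)=h^\alpha(x)+\ell_f(x;y_0)$ and $\Gamma_{j+1}(x)=(1-\zeta_j)\Gamma_j(x)+\zeta_j(h^\alpha(x)+\ell_f(x;x_j))$ for $0\le j\le k-1$. *)

theory Defs
  imports "HOL-Analysis.Analysis"
begin

text \<open>Extended-real-valued functions on a Euclidean space model functions into
  (-inf, +inf]. The space R^n is an arbitrary Euclidean space type 'a, with its
  standard inner product as dual pairing; the norm of the paper is an arbitrary
  norm N on 'a (not necessarily the Euclidean one).\<close>

definition is_norm :: "('a::real_vector \<Rightarrow> real) \<Rightarrow> bool" where
  "is_norm N \<longleftrightarrow> (\<forall>x. N x \<ge> 0) \<and> (\<forall>x. N x = 0 \<longleftrightarrow> x = 0)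
     \<and> (\<forall>c x. N (c *\<^sub>R x) = \<bar>c\<bar> * N x) \<and> (\<forall>x y. N (x + y) \<le> N x + N y)"

definition dual_norm :: "('a::real_inner \<Rightarrow> real) \<Rightarrow> 'a \<Rightarrow> real" where
  "dual_norm N s = Sup {inner s x | x. N x \<le> 1}"

definition edom :: "('a \<Rightarrow> ereal) \<Rightarrow> 'a set" where
  "edom F = {x. F x < \<infinity>}"

definition proper_fun :: "('a \<Rightarrow> ereal) \<Rightarrow> bool" where
  "proper_fun F \<longleftrightarrow> (\<forall>x. F x > -\<infinity>) \<and> (\<exists>x. F x < \<infinity>)"

definition convex_fun :: "('a::real_vector \<Rightarrow> ereal) \<Rightarrow> bool" where
  "convex_fun F \<longleftrightarrow> (\<forall>x y t. 0 \<le> t \<and> t \<le> 1 \<longrightarrow>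
     F (t *\<^sub>R x + (1 - t) *\<^sub>R y) \<le> ereal t * F x + ereal (1 - t) * F y)"

text \<open>Closed (= lower semicontinuous = closed epigraph): all sublevel sets closed.\<close>
definition closed_fun :: "('a::topological_space \<Rightarrow> ereal) \<Rightarrow> bool" where
  "closed_fun F \<longleftrightarrow> (\<forall>c::real. closed {x. F x \<le> ereal c})"

definition strongly_convex_on ::
    "'a::real_vector set \<Rightarrow> ('a \<Rightarrow> real) \<Rightarrow> real \<Rightarrow> ('a \<Rightarrow> ereal) \<Rightarrow> bool" where
  "strongly_convex_on S N mu F \<longleftrightarrow> (\<forall>x\<in>S. \<forall>y\<in>S. \<forall>t. 0 < t \<and> t < 1 \<longrightarrow>
     F (t *\<^sub>R x + (1 - t) *\<^sub>R y)
       \<le> ereal t * F x + ereal (1 - t) * F y - ereal (mu / 2 * t * (1 - t) * (N (x - y))\<^sup>2))"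

definition L_smooth :: "('a::real_inner \<Rightarrow> real) \<Rightarrow> real \<Rightarrow> ('a \<Rightarrow> 'a) \<Rightarrow> bool" where
  "L_smooth N L g \<longleftrightarrow> (\<forall>x y. dual_norm N (g x - g y) \<le> L * N (x - y))"

definition conj :: "('a::real_inner \<Rightarrow> ereal) \<Rightarrow> 'a \<Rightarrow> ereal" where
  "conj F z = (SUP x. ereal (inner z x) - F x)"

definition lin_f :: "('a::real_inner \<Rightarrow> real) \<Rightarrow> ('a \<Rightarrow> 'a) \<Rightarrow> 'a \<Rightarrow> 'a \<Rightarrow> real" where
  "lin_f f g x0 x = f x0 + inner (g x0) (x - x0)"

definition h_alpha :: "('a \<Rightarrow> ereal) \<Rightarrow> ('a \<Rightarrow> ereal) \<Rightarrow> real \<Rightarrow> 'a \<Rightarrow> ereal" where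
  "h_alpha h w \<alpha> x = h x + ereal \<alpha> * w x"

definition phi_alpha :: "('a \<Rightarrow> real) \<Rightarrow> ('a \<Rightarrow> ereal) \<Rightarrow> ('a \<Rightarrow> ereal) \<Rightarrow> real \<Rightarrow> 'a \<Rightarrow> ereal" where
  "phi_alpha f h w \<alpha> x = ereal (f x) + h_alpha h w \<alpha> x"

definition psi_alpha :: "('a::real_inner \<Rightarrow> real) \<Rightarrow> ('a \<Rightarrow> ereal) \<Rightarrow> ('a \<Rightarrow> ereal) \<Rightarrow> real \<Rightarrow> 'a \<Rightarrow> ereal" where
  "psi_alpha f h w \<alpha> z = conj (h_alpha h w \<alpha>) (- z) + conj (\<lambda>x. ereal (f x)) z"

primrec acp :: "('a::real_inner \<Rightarrow> real) \<Rightarrow> ('a \<Rightarrow> 'a) \<Rightarrow> ('a \<Rightarrow> ereal) \<Rightarrow> ('a \<Rightarrow> ereal) \<Rightarrow> real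
    \<Rightarrow> 'a \<Rightarrow> (nat \<Rightarrow> 'a) \<Rightarrow> (nat \<Rightarrow> real) \<Rightarrow> nat \<Rightarrow> 'a \<Rightarrow> ereal" where
  "acp f g h w \<alpha> y0 xs \<zeta> 0 x = h_alpha h w \<alpha> x + ereal (lin_f f g y0 x)"
| "acp f g h w \<alpha> y0 xs \<zeta> (Suc j) x =
     ereal (1 - \<zeta> j) * acp f g h w \<alpha> y0 xs \<zeta> j x
     + ereal (\<zeta> j) * (h_alpha h w \<alpha> x + ereal (lin_f f g (xs j) x))"

primrec agg_grad :: "('a::real_vector \<Rightarrow> 'a) \<Rightarrow> 'a \<Rightarrow> (nat \<Rightarrow> 'a) \<Rightarrow> (nat \<Rightarrow> real) \<Rightarrow> nat \<Rightarrow> 'a" where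
  "agg_grad g y0 xs \<zeta> 0 = g y0"
| "agg_grad g y0 xs \<zeta> (Suc j) = (1 - \<zeta> j) *\<^sub>R agg_grad g y0 xs \<zeta> j + \<zeta> j *\<^sub>R g (xs j)"

end

theory Submission
  imports Defs
begin

lemma grad_ineq:
  fixes f :: "'a::real_inner \<Rightarrow> real"
  assumes fg: "\<And>x. (f has_derivative (\<lambda>v. inner (g x) v)) (at x)"
    and cv: "convex_on UNIV f"
  shows "f z + inner (g z) (x - z) \<le> f x"
proof -
  define p where "p = (\<lambda>t::real. f (z + t *\<^sub>R (x - z)))"
  have pc: "convex_on UNIV p"
  proof (rule convex_onI)
    fix t a b :: real assume t: "0 < t" "t < 1"
    have "z + ((1 - t) *\<^sub>R a + t *\<^sub>R b) *\<^sub>R (x - z)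
        = (1 - t) *\<^sub>R (z + a *\<^sub>R (x - z)) + t *\<^sub>R (z + b *\<^sub>R (x - z))"
      by (simp add: algebra_simps)
    then show "p ((1 - t) *\<^sub>R a + t *\<^sub>R b) \<le> (1 - t) * p a + t * p b"
      unfolding p_def using convex_onD[OF cv, of t] t by simp
  qed simp
  have d: "(p has_field_derivative inner (g z) (x - z)) (at 0)"
  proof -
    have "((\<lambda>t::real. z + t *\<^sub>R (x - z)) has_derivative (\<lambda>t. t *\<^sub>R (x - z))) (at 0)"
      by (auto intro!: derivative_eq_intros)
    from has_derivative_compose[OF this fg[of "z + 0 *\<^sub>R (x - z)"]]
    have "(p has_derivative (\<lambda>t. inner (g z) (t *\<^sub>R (x - z)))) (at 0)"
      by (simp add: p_def o_def)
    then show ?thesis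
      by (simp add: has_field_derivative_def mult.commute[of _ "g z \<bullet> (x - z)"])
  qed
  have "p 1 - p 0 \<ge> inner (g z) (x - z) * (1 - 0)"
    by (rule convex_on_imp_above_tangent[OF pc]) (use d in auto)
  then show ?thesis by (simp add: p_def)
qed

primrec linp :: "('a::real_inner \<Rightarrow> real) \<Rightarrow> ('a \<Rightarrow> 'a) \<Rightarrow> 'a \<Rightarrow> (nat \<Rightarrow> 'a) \<Rightarrow> (nat \<Rightarrow> real) \<Rightarrow> nat \<Rightarrow> 'a \<Rightarrow> real" where
  "linp f g y0 xs \<zeta> 0 x = lin_f f g y0 x"
| "linp f g y0 xs \<zeta> (Suc j) x = (1 - \<zeta> j) * linp f g y0 xs \<zeta> j x + \<zeta> j * lin_f f g (xs j) x"

lemma linp_aff: "linp f g y0 xs \<zeta> k x = linp f g y0 xs \<zeta> k 0 + inner (agg_grad g y0 xs \<zeta> k) x"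
  by (induction k) (auto simp: lin_f_def algebra_simps inner_diff_right)

lemma linp_le:
  assumes fg: "\<And>x. (f has_derivative (\<lambda>v. inner (g x) v)) (at x)"
    and cv: "convex_on UNIV f"
    and zeta: "\<And>i. i < k \<Longrightarrow> 0 \<le> \<zeta> i \<and> \<zeta> i \<le> 1"
  shows "linp f g y0 xs \<zeta> k x \<le> f x"
  using zeta
proof (induction k)
  case 0
  then show ?case using grad_ineq[OF fg cv] by (simp add: lin_f_def)
next
  case (Suc k)
  have z: "0 \<le> \<zeta> k" "\<zeta> k \<le> 1" using Suc.prems by auto
  have a: "linp f g y0 xs \<zeta> k x \<le> f x" using Suc by auto
  have b: "lin_f f g (xs k) x \<le> f x" using grad_ineq[OF fg cv] by (simp add: lin_f_def)
  have "(1 - \<zeta> k) * linp f g y0 xs \<zeta> k x + \<zeta> k * lin_f f g (xs k) x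
      \<le> (1 - \<zeta> k) * f x + \<zeta> k * f x"
    by (intro add_mono mult_left_mono a b) (use z in auto)
  then show ?case by (simp add: algebra_simps)
qed

lemma comb_ereal:
  assumes "0 \<le> c" "c \<le> 1" "H \<noteq> -\<infinity>"
  shows "ereal (1 - c) * (H + ereal a) + ereal c * (H + ereal b) = H + ereal ((1 - c) * a + c * b)"
proof (cases H)
  case (real r)
  then show ?thesis by (simp add: algebra_simps)
next
  case PInf
  then show ?thesis using assms
    by (cases "c = 0"; cases "c = 1") auto
qed (use assms in auto)

lemma acp_eq:
  assumes zeta: "\<And>i. i < k \<Longrightarrow> 0 \<le> \<zeta> i \<and> \<zeta> i \<le> 1"
    and H: "\<And>x. h_alpha h w \<alpha> x \<noteq> -\<infinity>"
  shows "acp f g h w \<alpha> y0 xs \<zeta> k x = h_alpha h w \<alpha> x + ereal (linp f g y0 xs \<zeta> k x)"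
  using zeta
proof (induction k)
  case 0
  then show ?case by simp
next
  case (Suc k)
  have z: "0 \<le> \<zeta> k" "\<zeta> k \<le> 1" using Suc.prems by auto
  show ?case using Suc comb_ereal[OF z H] by simp
qed

theorem lemma2p3:
  fixes N :: "'a::euclidean_space \<Rightarrow> real"
    and f :: "'a \<Rightarrow> real" and g :: "'a \<Rightarrow> 'a" and L :: real
    and h w :: "'a \<Rightarrow> ereal" and \<alpha> :: real
    and y0 :: 'a and xs :: "nat \<Rightarrow> 'a" and \<zeta> :: "nat \<Rightarrow> real" and k :: nat
  assumes norm: "is_norm N"
    and f_grad: "\<And>x. (f has_derivative (\<lambda>v. inner (g x) v)) (at x)"
    and f_convex: "convex_on UNIV f"
    and L_pos: "L > 0"
    and f_smooth: "L_smooth N L g"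
    and h_closed: "closed_fun h" and h_proper: "proper_fun h" and h_convex: "convex_fun h"
    and h_bdd: "bounded (edom h)"
    and w_nonneg: "\<And>x. w x \<ge> 0"
    and w_closed: "closed_fun w"
    and w_sc: "strongly_convex_on (edom h) N 1 w"
    and w_max: "\<exists>M::real. \<forall>x\<in>edom h. w x \<le> ereal M"
    and alpha_pos: "\<alpha> > 0"
    and y0_dom: "y0 \<in> edom h"
    and xs_dom: "\<And>i. i < k \<Longrightarrow> xs i \<in> edom h"
    and zeta: "\<And>i. i < k \<Longrightarrow> 0 \<le> \<zeta> i \<and> \<zeta> i \<le> 1"
  shows "(\<forall>x\<in>edom h. acp f g h w \<alpha> y0 xs \<zeta> k x \<le> phi_alpha f h w \<alpha> x)
       \<and> strongly_convex_on UNIV N \<alpha> (acp f g h w \<alpha> y0 xs \<zeta> k)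
       \<and> (\<forall>u\<in>edom h. phi_alpha f h w \<alpha> u + psi_alpha f h w \<alpha> (agg_grad g y0 xs \<zeta> k)
            \<le> phi_alpha f h w \<alpha> u - (INF x. acp f g h w \<alpha> y0 xs \<zeta> k x))"
proof -
  let ?H = "h_alpha h w \<alpha>"
  let ?G = "acp f g h w \<alpha> y0 xs \<zeta> k"
  let ?l = "linp f g y0 xs \<zeta> k"
  let ?s = "agg_grad g y0 xs \<zeta> k"
  let ?A = "linp f g y0 xs \<zeta> k 0"
  have hninf: "h x \<noteq> -\<infinity>" for x using h_proper unfolding proper_fun_def by auto
  have aw: "ereal \<alpha> * w x \<ge> 0" for x using w_nonneg alpha_pos by simp
  have Hn: "?H x \<noteq> -\<infinity>" for x
    using hninf[of x] aw[of x] unfolding h_alpha_def by (cases "h x"; cases "ereal \<alpha> * w x") auto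
  have Geq: "?G x = ?H x + ereal (?l x)" for x
    by (rule acp_eq[OF zeta Hn]) auto
  have lle: "?l x \<le> f x" for x by (rule linp_le[OF f_grad f_convex zeta]) auto
  obtain M where M: "\<forall>x\<in>edom h. w x \<le> ereal M" using w_max by blast
  have dom_real: "\<exists>a b. h x = ereal a \<and> w x = ereal b" if "x \<in> edom h" for x
  proof -
    have "h x < \<infinity>" using that by (simp add: edom_def)
    moreover have "w x \<le> ereal M" using M that by auto
    ultimately show ?thesis using hninf[of x] w_nonneg[of x]
      by (cases "h x"; cases "w x") auto
  qed
  have Hout: "?H x = \<infinity>" if "x \<notin> edom h" for x
  proof -
    have "h x = \<infinity>" using that by (simp add: edom_def)
    then show ?thesis using aw[of x] unfolding h_alpha_def by (cases "ereal \<alpha> * w x") auto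
  qed
  have partA: "\<forall>x\<in>edom h. ?G x \<le> phi_alpha f h w \<alpha> x"
  proof
    fix x assume "x \<in> edom h"
    have "?G x = ?H x + ereal (?l x)" by (rule Geq)
    also have "\<dots> \<le> ?H x + ereal (f x)" by (intro add_left_mono) (simp add: lle)
    also have "\<dots> = phi_alpha f h w \<alpha> x" by (simp add: phi_alpha_def add.commute)
    finally show "?G x \<le> phi_alpha f h w \<alpha> x" .
  qed
  have partB: "strongly_convex_on UNIV N \<alpha> ?G"
    unfolding strongly_convex_on_def
  proof (intro ballI allI impI)
    fix x y and t :: real assume t: "0 < t \<and> t < 1"
    show "?G (t *\<^sub>R x + (1 - t) *\<^sub>R y)
       \<le> ereal t * ?G x + ereal (1 - t) * ?G y - ereal (\<alpha> / 2 * t * (1 - t) * (N (x - y))\<^sup>2)"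
    proof (cases "x \<in> edom h \<and> y \<in> edom h")
      case False
      then have "?G x = \<infinity> \<or> ?G y = \<infinity>" using Geq Hout by auto
      moreover have "?G x \<noteq> -\<infinity>" "?G y \<noteq> -\<infinity>" using Geq Hn by auto
      ultimately have "ereal t * ?G x + ereal (1 - t) * ?G y = \<infinity>"
        using t by (cases "?G x"; cases "?G y") auto
      then have "ereal t * ?G x + ereal (1 - t) * ?G y - ereal (\<alpha> / 2 * t * (1 - t) * (N (x - y))\<^sup>2) = \<infinity>"
        by (simp only: ereal_minus(4))
      then show ?thesis by (simp only:) (rule ereal_less_eq(1))
    next
      case True
      then obtain hx wx hy wy where hx: "h x = ereal hx" "w x = ereal wx"
          and hy: "h y = ereal hy" "w y = ereal wy"
        using dom_real by blast
      define z where "z = t *\<^sub>R x + (1 - t) *\<^sub>R y"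
      have "h z \<le> ereal t * h x + ereal (1 - t) * h y"
        using h_convex t unfolding convex_fun_def z_def by auto
      then have hz1: "h z \<le> ereal (t * hx + (1 - t) * hy)" using hx hy by simp
      then have "z \<in> edom h" unfolding edom_def by (auto intro: le_less_trans)
      then obtain hz wz where hz: "h z = ereal hz" "w z = ereal wz" using dom_real by blast
      have "w z \<le> ereal t * w x + ereal (1 - t) * w y - ereal (1 / 2 * t * (1 - t) * (N (x - y))\<^sup>2)"
        using w_sc True t unfolding strongly_convex_on_def z_def by auto
      then have wz1: "wz \<le> t * wx + (1 - t) * wy - 1 / 2 * t * (1 - t) * (N (x - y))\<^sup>2"
        using hx hy hz by simp
      have hz2: "hz \<le> t * hx + (1 - t) * hy" using hz1 hz by simp
      have iz: "inner ?s z = t * inner ?s x + (1 - t) * inner ?s y"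
        unfolding z_def by (simp add: inner_add_right)
      have lz: "?l z = t * ?l x + (1 - t) * ?l y"
        using linp_aff[of f g y0 xs \<zeta> k z] linp_aff[of f g y0 xs \<zeta> k x] linp_aff[of f g y0 xs \<zeta> k y] iz
        by (simp add: ring_distribs)
      have "\<alpha> * wz \<le> \<alpha> * (t * wx + (1 - t) * wy - 1 / 2 * t * (1 - t) * (N (x - y))\<^sup>2)"
        using wz1 alpha_pos by (intro mult_left_mono) auto
      then have real: "hz + \<alpha> * wz + ?l z \<le> t * (hx + \<alpha> * wx + ?l x) + (1 - t) * (hy + \<alpha> * wy + ?l y)
          - \<alpha> / 2 * t * (1 - t) * (N (x - y))\<^sup>2"
        using hz2 lz by (simp add: algebra_simps)
      show ?thesis
        using real Geq[of x] Geq[of y] Geq[of z] hx hy hz unfolding z_def[symmetric]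
        by (simp add: h_alpha_def)
    qed
  qed
  have partC: "\<forall>u\<in>edom h. phi_alpha f h w \<alpha> u + psi_alpha f h w \<alpha> ?s
            \<le> phi_alpha f h w \<alpha> u - (INF x. ?G x)"
  proof
    fix u assume u: "u \<in> edom h"
    obtain hu wu where huw: "h u = ereal hu" "w u = ereal wu" using dom_real[OF u] by blast
    define p where "p = f u + hu + \<alpha> * wu"
    have pe: "phi_alpha f h w \<alpha> u = ereal p" using huw by (simp add: phi_alpha_def h_alpha_def p_def)
    have Y: "conj (\<lambda>x. ereal (f x)) ?s \<le> ereal (- ?A)"
      unfolding conj_def
    proof (rule SUP_least)
      fix x
      have "?A + inner ?s x \<le> f x" using lle[of x] linp_aff[of f g y0 xs \<zeta> k x] by simp
      then show "ereal (inner ?s x) - ereal (f x) \<le> ereal (- ?A)" by simp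
    qed
    have X: "conj ?H (- ?s) \<le> ereal ?A - (INF x. ?G x)"
      unfolding conj_def
    proof (rule SUP_least)
      fix y
      have e: "ereal (inner (- ?s) y) - ?H y = ereal ?A - ?G y"
        using Geq[of y] linp_aff[of f g y0 xs \<zeta> k y] Hn[of y]
        by (cases "?H y") (auto simp: algebra_simps)
      have "(INF x. ?G x) \<le> ?G y" by (rule INF_lower) simp
      then have "ereal ?A - ?G y \<le> ereal ?A - (INF x. ?G x)"
        by (intro ereal_minus_mono order_refl)
      then show "ereal (inner (- ?s) y) - ?H y \<le> ereal ?A - (INF x. ?G x)" using e by simp
    qed
    have "psi_alpha f h w \<alpha> ?s \<le> (ereal ?A - (INF x. ?G x)) + ereal (- ?A)"
      unfolding psi_alpha_def by (intro add_mono X Y)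
    also have "\<dots> = - (INF x. ?G x)"
      by (cases "INF x. ?G x") auto
    finally have "ereal p + psi_alpha f h w \<alpha> ?s \<le> ereal p + - (INF x. ?G x)"
      by (rule add_left_mono)
    also have "\<dots> = ereal p - (INF x. ?G x)" by (cases "INF x. ?G x") auto
    finally show "phi_alpha f h w \<alpha> u + psi_alpha f h w \<alpha> ?s
            \<le> phi_alpha f h w \<alpha> u - (INF x. ?G x)" using pe by simp
  qed
  show ?thesis using partA partB partC by blast
qed

end
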